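(* Let $v_1,v_2\in\Sigma^*$ (not necessarily distinct), let $u_1$ be a $v_1$-minimal word and $u_2$ a $v_2$-minimal word, and suppose $\mathrm{supp}(u_1)\neq\mathrm{supp}(u_2)$. Then $\mathrm{supp}(u_1)\cap\mathrm{supp}(u_2)=\emptyset$.
   Context: Let $\mathcal{A}=\langle Q,\Sigma,\delta\rangle$ be a synchronizing automaton with $n$ states $q_1,\dots,q_n$. Each word acts linearly on $\mathbb{C}Q$ by $q\mapsto q\cdot u$, preserving $w^\perp=\{x:\langle x,q_1+\dots+q_n\rangle=0\}$; let $\rho:\Sigma^*\to\mathbb{M}_{n-1}(\mathbb{C})$ be the induced representation and $\mathcal{R}$ the $\mathbb{C}$-algebra generated by $\rho(\Sigma^* )$. Write $\mathcal{R}/\mathrm{Rad}(\mathcal{R})\cong\prod_{i=1}^k\mathbb{M}_{n_i}(\mathbb{C})$ (Jacobson radical, Wedderburn–Artin) and let $\theta_i:\Sigma^*\to\mathbb{M}_{n_i}(\mathbb{C})$ be $\rho$ followed by the quotient map and the $i$-th projection; $0_i$ is the zero matrix. The support of a word $z$ is $\mathrm{supp}(z)=\{i:\theta_i(z)\neq0_i\}$. For $v\in\Sigma^*$, a word $u\in\Sigma^*v\Sigma^*$ is $v$-minimal, and $\mathrm{supp}(u)$ is a ($v$-)minimal section, if $\mathrm{supp}(u)\neq\emptyset$ and there is no $z\in\Sigma^*v\Sigma^*$ with $\emptyset\neq\mathrm{supp}(z)\subsetneq\mathrm{supp}(u)$. *)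

theory Defs
  imports Complex_Main "Jordan_Normal_Form.Matrix"
begin

text \<open>Automaton with states 0..<n (state q_(i+1) is index i), alphabet the finite type 'a,
  transition function delta.  Words are lists.\<close>

fun ext_delta :: "(nat \<Rightarrow> 'a \<Rightarrow> nat) \<Rightarrow> nat \<Rightarrow> 'a list \<Rightarrow> nat" where
  "ext_delta d q [] = q"
| "ext_delta d q (a # w) = ext_delta d (d q a) w"

definition is_automaton :: "nat \<Rightarrow> (nat \<Rightarrow> 'a \<Rightarrow> nat) \<Rightarrow> bool" where
  "is_automaton n d \<longleftrightarrow> n \<ge> 1 \<and> (\<forall>q<n. \<forall>a. d q a < n)"

definition synchronizing :: "nat \<Rightarrow> (nat \<Rightarrow> 'a \<Rightarrow> nat) \<Rightarrow> bool" where
  "synchronizing n d \<longleftrightarrow> (\<exists>w. \<forall>p<n. \<forall>q<n. ext_delta d p w = ext_delta d q w)"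

text \<open>The representation rho on w-perp (sum of coordinates zero), written as an
  (n-1)x(n-1) matrix w.r.t. the basis b_i = q_i - q_n (i = 1..n-1), vectors as row vectors
  acting on the right: row i of rho(u) is the coordinate vector of b_i . u
  = q_(i.u) - q_(n.u) = b_(i.u) - b_(n.u)  (with b_n = 0).\<close>

definition rho :: "nat \<Rightarrow> (nat \<Rightarrow> 'a \<Rightarrow> nat) \<Rightarrow> 'a list \<Rightarrow> complex mat" where
  "rho n d u = mat (n - 1) (n - 1)
     (\<lambda>(i, j). (if ext_delta d i u = j then 1 else 0)
             - (if ext_delta d (n - 1) u = j then 1 else 0))"

text \<open>The complex algebra generated by a set S of m x m matrices (smallest set containing S
  and 0, closed under sum, scalar multiples and products; here S contains the identity
  matrix rho of the empty word, so the algebra is unital).\<close>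

inductive_set gen_alg :: "nat \<Rightarrow> complex mat set \<Rightarrow> complex mat set" for m S where
  gen: "A \<in> S \<Longrightarrow> A \<in> gen_alg m S"
| zero: "0\<^sub>m m m \<in> gen_alg m S"
| add: "A \<in> gen_alg m S \<Longrightarrow> B \<in> gen_alg m S \<Longrightarrow> A + B \<in> gen_alg m S"
| smult: "A \<in> gen_alg m S \<Longrightarrow> c \<cdot>\<^sub>m A \<in> gen_alg m S"
| mult: "A \<in> gen_alg m S \<Longrightarrow> B \<in> gen_alg m S \<Longrightarrow> A * B \<in> gen_alg m S"

definition rep_alg :: "nat \<Rightarrow> (nat \<Rightarrow> 'a \<Rightarrow> nat) \<Rightarrow> complex mat set" where
  "rep_alg n d = gen_alg (n - 1) (range (rho n d))"

definition left_ideal :: "complex mat set \<Rightarrow> complex mat set \<Rightarrow> bool" where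
  "left_ideal R L \<longleftrightarrow> L \<subseteq> R \<and> L \<noteq> {} \<and> (\<forall>x\<in>L. \<forall>y\<in>L. x + y \<in> L)
     \<and> (\<forall>r\<in>R. \<forall>x\<in>L. r * x \<in> L)"

definition maximal_left_ideal :: "complex mat set \<Rightarrow> complex mat set \<Rightarrow> bool" where
  "maximal_left_ideal R L \<longleftrightarrow> left_ideal R L \<and> L \<noteq> R
     \<and> (\<forall>L'. left_ideal R L' \<and> L' \<noteq> R \<and> L \<subseteq> L' \<longrightarrow> L' = L)"

definition jacobson_radical :: "complex mat set \<Rightarrow> complex mat set" where
  "jacobson_radical R = {x \<in> R. \<forall>L. maximal_left_ideal R L \<longrightarrow> x \<in> L}"

text \<open>A Wedderburn--Artin decomposition of R/Rad(R): a surjective unital C-algebra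
  homomorphism phi from R onto the product of M_(ns i)(C), i < k, whose kernel is Rad(R)
  (equivalently an isomorphism R/Rad(R) = prod M_(ns i)(C)).  Elements of the product are
  represented as functions nat => complex mat, only the components i < k being relevant.\<close>

definition wedderburn_decomp ::
  "nat \<Rightarrow> complex mat set \<Rightarrow> nat \<Rightarrow> (nat \<Rightarrow> nat) \<Rightarrow> (complex mat \<Rightarrow> nat \<Rightarrow> complex mat) \<Rightarrow> bool" where
  "wedderburn_decomp m R k ns phi \<longleftrightarrow>
     (\<forall>i<k. ns i \<ge> 1)
   \<and> (\<forall>x\<in>R. \<forall>i<k. phi x i \<in> carrier_mat (ns i) (ns i))
   \<and> (\<forall>x\<in>R. \<forall>y\<in>R. \<forall>i<k. phi (x + y) i = phi x i + phi y i)
   \<and> (\<forall>x\<in>R. \<forall>c. \<forall>i<k. phi (c \<cdot>\<^sub>m x) i = c \<cdot>\<^sub>m phi x i)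
   \<and> (\<forall>x\<in>R. \<forall>y\<in>R. \<forall>i<k. phi (x * y) i = phi x i * phi y i)
   \<and> (\<forall>i<k. phi (1\<^sub>m m) i = 1\<^sub>m (ns i))
   \<and> (\<forall>f. (\<forall>i<k. f i \<in> carrier_mat (ns i) (ns i)) \<longrightarrow> (\<exists>x\<in>R. \<forall>i<k. phi x i = f i))
   \<and> (\<forall>x\<in>R. (\<forall>i<k. phi x i = 0\<^sub>m (ns i) (ns i)) \<longleftrightarrow> x \<in> jacobson_radical R)"

text \<open>theta_i(z) = phi(rho z) i; support of a word.\<close>

definition supp ::
  "nat \<Rightarrow> (nat \<Rightarrow> 'a \<Rightarrow> nat) \<Rightarrow> nat \<Rightarrow> (nat \<Rightarrow> nat) \<Rightarrow> (complex mat \<Rightarrow> nat \<Rightarrow> complex mat)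
     \<Rightarrow> 'a list \<Rightarrow> nat set" where
  "supp n d k ns phi z = {i. i < k \<and> phi (rho n d z) i \<noteq> 0\<^sub>m (ns i) (ns i)}"

definition contains_factor :: "'a list \<Rightarrow> 'a list \<Rightarrow> bool" where
  "contains_factor v u \<longleftrightarrow> (\<exists>x y. u = x @ v @ y)"

definition v_minimal ::
  "nat \<Rightarrow> (nat \<Rightarrow> 'a \<Rightarrow> nat) \<Rightarrow> nat \<Rightarrow> (nat \<Rightarrow> nat) \<Rightarrow> (complex mat \<Rightarrow> nat \<Rightarrow> complex mat)
     \<Rightarrow> 'a list \<Rightarrow> 'a list \<Rightarrow> bool" where
  "v_minimal n d k ns phi v u \<longleftrightarrow>
     contains_factor v u \<and> supp n d k ns phi u \<noteq> {}
   \<and> \<not> (\<exists>z. contains_factor v z \<and> supp n d k ns phi z \<noteq> {}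
            \<and> supp n d k ns phi z \<subset> supp n d k ns phi u)"

end

theory Submission
  imports Defs
begin

lemma ext_append: "ext_delta d q (u@w) = ext_delta d (ext_delta d q u) w"
  by (induct u arbitrary: q) auto

lemma ext_range: "is_automaton n d \<Longrightarrow> q<n \<Longrightarrow> ext_delta d q u < n"
  by (induct u arbitrary: q) (auto simp: is_automaton_def)

lemma sum_ind:
  fixes f :: "nat \<Rightarrow> complex"
  assumes "p < n" "f (n-1) = 0"
  shows "(\<Sum>j\<in>{0..<n-1}. (if p = j then 1 else 0) * f j) = f p"
proof (cases "p < n - 1")
  case True
  then have "(\<Sum>j\<in>{0..<n-1}. (if p = j then 1 else 0) * f j) = (\<Sum>j\<in>{0..<n-1}. if p = j then f j else 0)"
    by (intro sum.cong) auto
  then show ?thesis using True by (simp add: sum.delta)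
next
  case False
  then have "p = n - 1" using assms by auto
  then show ?thesis using assms False by auto
qed

lemma rho_append:
  assumes "is_automaton n d"
  shows "rho n d (u@w) = rho n d u * rho n d w"
proof (rule eq_matI)
  fix i j assume ij: "i < dim_row (rho n d u * rho n d w)" "j < dim_col (rho n d u * rho n d w)"
  have n1: "n \<ge> 1" using assms by (simp add: is_automaton_def)
  define f where "f = (\<lambda>q. (if ext_delta d q w = j then 1 else 0) - (if ext_delta d (n - 1) w = j then 1 else 0) :: complex)"
  have f0: "f (n-1) = 0" by (simp add: f_def)
  have pi: "ext_delta d i u < n" "ext_delta d (n-1) u < n" using ij n1 ext_range[OF assms] by (auto simp: rho_def)
  have "(rho n d u * rho n d w) $$ (i,j) = (\<Sum>l\<in>{0..<n-1}. (rho n d u) $$ (i,l) * (rho n d w) $$ (l,j))"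
    using ij by (simp add: rho_def scalar_prod_def)
  also have "\<dots> = (\<Sum>l\<in>{0..<n-1}. ((if ext_delta d i u = l then 1 else 0) - (if ext_delta d (n - 1) u = l then 1 else 0)) * f l)"
    using ij by (intro sum.cong) (auto simp: rho_def f_def)
  also have "\<dots> = (\<Sum>l\<in>{0..<n-1}. (if ext_delta d i u = l then 1 else 0) * f l) - (\<Sum>l\<in>{0..<n-1}. (if ext_delta d (n-1) u = l then 1 else 0) * f l)"
    by (simp add: left_diff_distrib sum_subtractf)
  also have "\<dots> = f (ext_delta d i u) - f (ext_delta d (n-1) u)"
    using sum_ind[of _ n f, OF pi(1) f0] sum_ind[of _ n f, OF pi(2) f0] by simp
  also have "\<dots> = rho n d (u@w) $$ (i,j)"
    using ij by (simp add: rho_def f_def ext_append)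
  finally show "rho n d (u @ w) $$ (i, j) = (rho n d u * rho n d w) $$ (i, j)" by simp
qed (auto simp: rho_def)

lemma zero_smult_carrier: "X \<in> carrier_mat a b \<Longrightarrow> (0::complex) \<cdot>\<^sub>m X = 0\<^sub>m a b"
  by (rule eq_matI) auto

lemma key:
  assumes A: "is_automaton n d" and W: "wedderburn_decomp (n-1) (rep_alg n d) k ns phi" and ik: "i < k"
    and x: "x \<in> rep_alg n d"
  shows "\<And>M N. M \<in> carrier_mat a (ns i) \<Longrightarrow> N \<in> carrier_mat (ns i) b \<Longrightarrow>
     (\<forall>w. M * phi (rho n d w) i * N = 0\<^sub>m a b) \<Longrightarrow> M * phi x i * N = 0\<^sub>m a b"
  using x unfolding rep_alg_def
proof (induction x rule: gen_alg.induct)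
  case (gen A)
  then show ?case by auto
next
  case zero
  have z: "0\<^sub>m (n-1) (n-1) \<in> rep_alg n d" unfolding rep_alg_def by (rule gen_alg.zero)
  have c: "phi (0\<^sub>m (n-1) (n-1)) i \<in> carrier_mat (ns i) (ns i)" using W z ik unfolding wedderburn_decomp_def by blast
  have "phi ((0::complex) \<cdot>\<^sub>m 0\<^sub>m (n-1) (n-1)) i = 0 \<cdot>\<^sub>m phi (0\<^sub>m (n-1) (n-1)) i"
    using W z ik unfolding wedderburn_decomp_def by blast
  then have "phi (0\<^sub>m (n-1) (n-1)) i = 0\<^sub>m (ns i) (ns i)" using zero_smult_carrier[OF c] by simp
  then show ?case using zero.prems by simp
next
  case (add A B)
  have AB: "A \<in> rep_alg n d" "B \<in> rep_alg n d" using add.hyps unfolding rep_alg_def by auto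
  have cA: "phi A i \<in> carrier_mat (ns i) (ns i)" and cB: "phi B i \<in> carrier_mat (ns i) (ns i)"
    using W AB ik unfolding wedderburn_decomp_def by blast+
  have e: "phi (A + B) i = phi A i + phi B i" using W AB ik unfolding wedderburn_decomp_def by blast
  have "M * phi (A+B) i * N = M * phi A i * N + M * phi B i * N"
    using add.prems(1,2) cA cB unfolding e
    by (simp add: mult_add_distrib_mat[of M a "ns i"] add_mult_distrib_mat[of _ a "ns i"])
  then show ?case using add.IH add.prems by simp
next
  case (smult A c)
  have AB: "A \<in> rep_alg n d" using smult.hyps unfolding rep_alg_def by auto
  have cA: "phi A i \<in> carrier_mat (ns i) (ns i)"
    using W AB ik unfolding wedderburn_decomp_def by blast+
  have e: "phi (c \<cdot>\<^sub>m A) i = c \<cdot>\<^sub>m phi A i" using W AB ik unfolding wedderburn_decomp_def by blast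
  have "M * phi (c \<cdot>\<^sub>m A) i * N = c \<cdot>\<^sub>m (M * phi A i * N)"
    using smult.prems(1,2) cA unfolding e
    by (simp add: mult_smult_distrib[of M a "ns i"] mult_smult_assoc_mat[of _ a "ns i"])
  then show ?case using smult.IH smult.prems by simp
next
  case (mult A B)
  have AB: "A \<in> rep_alg n d" "B \<in> rep_alg n d" using mult.hyps unfolding rep_alg_def by auto
  have cA: "phi A i \<in> carrier_mat (ns i) (ns i)" and cB: "phi B i \<in> carrier_mat (ns i) (ns i)"
    using W AB ik unfolding wedderburn_decomp_def by blast+
  have e: "phi (A * B) i = phi A i * phi B i" using W AB ik unfolding wedderburn_decomp_def by blast
  have cw: "phi (rho n d w) i \<in> carrier_mat (ns i) (ns i)" for w
  proof -
    have "rho n d w \<in> rep_alg n d" unfolding rep_alg_def by (rule gen_alg.gen) simp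
    then show ?thesis using W ik unfolding wedderburn_decomp_def by blast
  qed
  have 1: "M * phi A i * (phi (rho n d w) i * N) = 0\<^sub>m a b" for w
  proof (rule mult.IH(1)[OF mult.prems(1)])
    show "phi (rho n d w) i * N \<in> carrier_mat (ns i) b" using mult_carrier_mat[OF cw mult.prems(2)] .
    show "\<forall>w'. M * phi (rho n d w') i * (phi (rho n d w) i * N) = 0\<^sub>m a b"
    proof
      fix w'
      have r: "rho n d (w' @ w) = rho n d w' * rho n d w" using rho_append[OF A] .
      have g1: "rho n d w' \<in> rep_alg n d" "rho n d w \<in> rep_alg n d" unfolding rep_alg_def by (rule gen_alg.gen, simp)+
      have Wm: "\<forall>x\<in>rep_alg n d. \<forall>y\<in>rep_alg n d. \<forall>i<k. phi (x * y) i = phi x i * phi y i"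
        using W unfolding wedderburn_decomp_def by blast
      have pe: "phi (rho n d (w' @ w)) i = phi (rho n d w') i * phi (rho n d w) i"
        unfolding r using Wm g1 ik by blast
      have z: "M * phi (rho n d (w' @ w)) i * N = 0\<^sub>m a b" using mult.prems(3) by blast
      have "M * phi (rho n d w') i * (phi (rho n d w) i * N) = (M * phi (rho n d w') i * phi (rho n d w) i) * N"
        using assoc_mult_mat[OF mult_carrier_mat[OF mult.prems(1) cw] cw mult.prems(2)] by simp
      also have "\<dots> = M * phi (rho n d (w' @ w)) i * N"
        unfolding pe using assoc_mult_mat[OF mult.prems(1) cw cw] by simp
      finally show "M * phi (rho n d w') i * (phi (rho n d w) i * N) = 0\<^sub>m a b" using z by simp
    qed
  qed
  have 2: "(M * phi A i) * phi B i * N = 0\<^sub>m a b"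
  proof (rule mult.IH(2))
    show "M * phi A i \<in> carrier_mat a (ns i)" using mult.prems(1) cA by auto
    show "N \<in> carrier_mat (ns i) b" by (rule mult.prems(2))
    show "\<forall>w. M * phi A i * phi (rho n d w) i * N = 0\<^sub>m a b"
    proof
      fix w
      show "M * phi A i * phi (rho n d w) i * N = 0\<^sub>m a b"
        using 1[of w] assoc_mult_mat[OF mult_carrier_mat[OF mult.prems(1) cA] cw mult.prems(2)] by simp
    qed
  qed
  have "M * phi (A * B) i * N = (M * phi A i) * phi B i * N"
    unfolding e using assoc_mult_mat[OF mult.prems(1) cA cB] by simp
  then show ?case using 2 by simp
qed

lemma nonzero_product:
  fixes A B :: "complex mat"
  assumes A: "A \<in> carrier_mat m m" and B: "B \<in> carrier_mat m m"
    and A0: "A \<noteq> 0\<^sub>m m m" and B0: "B \<noteq> 0\<^sub>m m m"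
    and all: "\<forall>E\<in>carrier_mat m m. A * E * B = 0\<^sub>m m m"
  shows False
proof -
  obtain p q where pq: "p < m" "q < m" "A $$ (p,q) \<noteq> 0"
    using A A0 by (metis (no_types, lifting) carrier_matD(1,2) eq_matI index_zero_mat(1,2,3))
  obtain r t where rt: "r < m" "t < m" "B $$ (r,t) \<noteq> 0"
    using B B0 by (metis (no_types, lifting) carrier_matD(1,2) eq_matI index_zero_mat(1,2,3))
  define E :: "complex mat" where "E = mat m m (\<lambda>(x,y). if x = q \<and> y = r then 1 else 0)"
  have E: "E \<in> carrier_mat m m" by (simp add: E_def)
  have AE: "(A * E) $$ (p, y) = (if y = r then A $$ (p,q) else 0)" if "y < m" for y
  proof -
    have "(A * E) $$ (p, y) = (\<Sum>x\<in>{0..<m}. A $$ (p,x) * E $$ (x,y))"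
      using A E pq that by (simp add: scalar_prod_def)
    also have "\<dots> = (\<Sum>x\<in>{0..<m}. if x = q then (if y = r then A $$ (p,q) else 0) else 0)"
      using that by (intro sum.cong) (auto simp: E_def)
    also have "\<dots> = (if y = r then A $$ (p,q) else 0)" using pq by (simp add: sum.delta)
    finally show ?thesis .
  qed
  have "(A * E * B) $$ (p, t) = (\<Sum>y\<in>{0..<m}. (A * E) $$ (p,y) * B $$ (y,t))"
    using A E B pq rt by (simp add: scalar_prod_def del: assoc_mult_mat)
  also have "\<dots> = (\<Sum>y\<in>{0..<m}. if y = r then A $$ (p,q) * B $$ (r,t) else 0)"
    by (intro sum.cong) (auto simp: AE)
  also have "\<dots> = A $$ (p,q) * B $$ (r,t)" using rt by (simp add: sum.delta)
  finally have "(A * E * B) $$ (p, t) \<noteq> 0" using pq rt by simp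
  moreover have "(A * E * B) $$ (p, t) = 0" using all E pq rt by simp
  ultimately show False by simp
qed

theorem mainTheorem7:
  fixes n :: nat and d :: "nat \<Rightarrow> 'a::finite \<Rightarrow> nat"
    and k :: nat and ns :: "nat \<Rightarrow> nat" and phi :: "complex mat \<Rightarrow> nat \<Rightarrow> complex mat"
    and v1 v2 u1 u2 :: "'a list"
  assumes "is_automaton n d"
    and "synchronizing n d"
    and "wedderburn_decomp (n - 1) (rep_alg n d) k ns phi"
    and "v_minimal n d k ns phi v1 u1"
    and "v_minimal n d k ns phi v2 u2"
    and "supp n d k ns phi u1 \<noteq> supp n d k ns phi u2"
  shows "supp n d k ns phi u1 \<inter> supp n d k ns phi u2 = {}"
proof (rule ccontr)
  note A = assms(1) and W = assms(3)
  assume "supp n d k ns phi u1 \<inter> supp n d k ns phi u2 \<noteq> {}"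
  then obtain i where i: "i \<in> supp n d k ns phi u1" "i \<in> supp n d k ns phi u2" by blast
  have ik: "i < k" using i by (simp add: supp_def)
  have inR: "rho n d w \<in> rep_alg n d" for w unfolding rep_alg_def by (rule gen_alg.gen) simp
  have Wc: "\<forall>x\<in>rep_alg n d. \<forall>i<k. phi x i \<in> carrier_mat (ns i) (ns i)"
    using W unfolding wedderburn_decomp_def by blast
  have Wm: "\<forall>x\<in>rep_alg n d. \<forall>y\<in>rep_alg n d. \<forall>i<k. phi (x * y) i = phi x i * phi y i"
    using W unfolding wedderburn_decomp_def by blast
  have Ws: "\<forall>f. (\<forall>i<k. f i \<in> carrier_mat (ns i) (ns i)) \<longrightarrow> (\<exists>x\<in>rep_alg n d. \<forall>i<k. phi x i = f i)"
    using W unfolding wedderburn_decomp_def by blast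
  have cw: "phi (rho n d w) j \<in> carrier_mat (ns j) (ns j)" if "j < k" for w j using Wc inR that by blast
  have nz1: "phi (rho n d u1) i \<noteq> 0\<^sub>m (ns i) (ns i)" and nz2: "phi (rho n d u2) i \<noteq> 0\<^sub>m (ns i) (ns i)"
    using i by (auto simp: supp_def)
  have "\<exists>w. phi (rho n d u1) i * phi (rho n d w) i * phi (rho n d u2) i \<noteq> 0\<^sub>m (ns i) (ns i)"
  proof (rule ccontr)
    assume "\<not> ?thesis"
    then have all0: "\<forall>w. phi (rho n d u1) i * phi (rho n d w) i * phi (rho n d u2) i = 0\<^sub>m (ns i) (ns i)" by blast
    have "\<forall>E\<in>carrier_mat (ns i) (ns i). phi (rho n d u1) i * E * phi (rho n d u2) i = 0\<^sub>m (ns i) (ns i)"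
    proof
      fix E :: "complex mat" assume E: "E \<in> carrier_mat (ns i) (ns i)"
      define f where "f = (\<lambda>j. if j = i then E else 0\<^sub>m (ns j) (ns j))"
      have "\<forall>j<k. f j \<in> carrier_mat (ns j) (ns j)" using E by (simp add: f_def)
      then obtain x where x: "x \<in> rep_alg n d" "\<forall>j<k. phi x j = f j" using Ws by blast
      have "phi (rho n d u1) i * phi x i * phi (rho n d u2) i = 0\<^sub>m (ns i) (ns i)"
        by (rule key[OF A W ik x(1) cw[OF ik, of u1] cw[OF ik, of u2] all0])
      then show "phi (rho n d u1) i * E * phi (rho n d u2) i = 0\<^sub>m (ns i) (ns i)"
        using x ik by (simp add: f_def)
    qed
    then show False using nonzero_product[OF cw[OF ik] cw[OF ik] nz1 nz2] by blast
  qed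
  then obtain w where w: "phi (rho n d u1) i * phi (rho n d w) i * phi (rho n d u2) i \<noteq> 0\<^sub>m (ns i) (ns i)" by blast
  define z where "z = u1 @ w @ u2"
  have th: "phi (rho n d z) j = phi (rho n d u1) j * (phi (rho n d w) j * phi (rho n d u2) j)" if "j < k" for j
  proof -
    have "rho n d z = rho n d u1 * (rho n d w * rho n d u2)"
      unfolding z_def using rho_append[OF A] by simp
    moreover have "rho n d w * rho n d u2 \<in> rep_alg n d"
      using rho_append[OF A, of w u2] inR by metis
    ultimately show ?thesis using Wm inR that by simp
  qed
  have s1: "supp n d k ns phi z \<subseteq> supp n d k ns phi u1"
  proof
    fix j assume j: "j \<in> supp n d k ns phi z"
    then have jk: "j < k" by (simp add: supp_def)
    show "j \<in> supp n d k ns phi u1"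
    proof (rule ccontr)
      assume "j \<notin> supp n d k ns phi u1"
      then have "phi (rho n d u1) j = 0\<^sub>m (ns j) (ns j)" using jk by (simp add: supp_def)
      then have "phi (rho n d z) j = 0\<^sub>m (ns j) (ns j)"
        using th[OF jk] cw[OF jk] by (simp add: left_mult_zero_mat[OF mult_carrier_mat[OF cw[OF jk] cw[OF jk]]])
      then show False using j by (simp add: supp_def)
    qed
  qed
  have s2: "supp n d k ns phi z \<subseteq> supp n d k ns phi u2"
  proof
    fix j assume j: "j \<in> supp n d k ns phi z"
    then have jk: "j < k" by (simp add: supp_def)
    show "j \<in> supp n d k ns phi u2"
    proof (rule ccontr)
      assume "j \<notin> supp n d k ns phi u2"
      then have "phi (rho n d u2) j = 0\<^sub>m (ns j) (ns j)" using jk by (simp add: supp_def)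
      then have "phi (rho n d z) j = 0\<^sub>m (ns j) (ns j)"
        using th[OF jk] cw[OF jk] by (simp add: right_mult_zero_mat[OF cw[OF jk]])
      then show False using j by (simp add: supp_def)
    qed
  qed
  have "phi (rho n d z) i = phi (rho n d u1) i * phi (rho n d w) i * phi (rho n d u2) i"
    using th[OF ik] assoc_mult_mat[OF cw[OF ik] cw[OF ik] cw[OF ik]] by simp
  then have "i \<in> supp n d k ns phi z" using w ik by (simp add: supp_def)
  then have ne: "supp n d k ns phi z \<noteq> {}" by blast
  have c1: "contains_factor v1 z"
  proof -
    obtain x y where "u1 = x @ v1 @ y" using assms(4) unfolding v_minimal_def contains_factor_def by blast
    then have "z = x @ v1 @ (y @ w @ u2)" unfolding z_def by simp
    then show ?thesis unfolding contains_factor_def by blast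
  qed
  have c2: "contains_factor v2 z"
  proof -
    obtain x y where "u2 = x @ v2 @ y" using assms(5) unfolding v_minimal_def contains_factor_def by blast
    then have "z = (u1 @ w @ x) @ v2 @ y" unfolding z_def by simp
    then show ?thesis unfolding contains_factor_def by blast
  qed
  have "supp n d k ns phi z = supp n d k ns phi u1" using assms(4) c1 ne s1 unfolding v_minimal_def by blast
  moreover have "supp n d k ns phi z = supp n d k ns phi u2" using assms(5) c2 ne s2 unfolding v_minimal_def by blast
  ultimately show False using assms(6) by simp
qed

end
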